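(* Let $n\ge1$ and $1\le m\le n$ be integers, $x>0$, and $\Delta\equiv\lfloor\frac{n+1}{m+1}\rfloor$. Let $\Delta_1,\dots,\Delta_{m+1}\in\{\Delta,\Delta+1\}$ be integers with $\sum_{k=1}^{m+1}\Delta_k=n+1$, and let $\boldsymbol v^*\in\mathbb{R}^n$ have $i$-th coordinate $x$ if $i\in\{\sum_{k=1}^{j}\Delta_k:1\le j\le m\}$ and $0$ otherwise. Then $\boldsymbol v^*$ minimizes $f$ over $\Lambda(mx)$, and \[ \min_{\boldsymbol v\in\Lambda(mx)} f(\boldsymbol v)=f(\boldsymbol v^* )=\Delta(n+1)x-\tfrac12(m+1)x\,\Delta(\Delta+1). \] Moreover, for every $\boldsymbol v\in\Lambda(mx)$ and every $1\le j\le n$, $\sum_{l=1}^{n+1-j}\bigl(x-\sum_{i=l}^{l+j-1}v_i\bigr)^+\ge\sum_{l=1}^{n+1-j}\bigl(x-\sum_{i=l}^{l+j-1}v^*_i\bigr)^+$.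
   Context: For $w>0$, $\Lambda(w)$ is the set of vectors in $\mathbb{R}^n$ with nonnegative coordinates summing to $w$. For $\boldsymbol v=(v_1,\dots,v_n)$, $f(\boldsymbol v)\equiv\sum_{1\le l\le k\le n}\bigl(x-\sum_{i=l}^k v_i\bigr)^+$, where $a^+=\max\{a,0\}$. *)

theory Defs
  imports Complex_Main
begin

text \<open>Vectors in R^n are represented as functions nat => real; only the
coordinates 1..n matter.\<close>

definition Lambda :: "nat \<Rightarrow> real \<Rightarrow> (nat \<Rightarrow> real) set" where
  "Lambda n w = {v. (\<forall>i\<in>{1..n}. v i \<ge> 0) \<and> (\<Sum>i=1..n. v i) = w}"

definition posp :: "real \<Rightarrow> real" where
  "posp a = max a 0"

definition fobj :: "nat \<Rightarrow> real \<Rightarrow> (nat \<Rightarrow> real) \<Rightarrow> real" where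
  "fobj n x v = (\<Sum>k=1..n. \<Sum>l=1..k. posp (x - (\<Sum>i=l..k. v i)))"

end

theory Submission imports Defs begin

lemma reidx:
  fixes g :: "nat \<Rightarrow> nat \<Rightarrow> real"
  shows "(\<Sum>k=1..n. \<Sum>l=1..k. g l k) = (\<Sum>j=1..n. \<Sum>l=1..n+1-j. g l (l+j-1))"
proof -
  have "(\<Sum>k=1..n. \<Sum>l=1..k. g l k) = (\<Sum>(k,l)\<in>(SIGMA k:{1..n}. {1..k}). g l k)"
    by (rule sum.Sigma) auto
  also have "\<dots> = (\<Sum>(j,l)\<in>(SIGMA j:{1..n}. {1..n+1-j}). g l (l+j-1))"
    by (rule sum.reindex_bij_witness[where i="\<lambda>(j,l). (l+j-1, l)" and j="\<lambda>(k,l). (k-l+1, l)"]) auto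
  also have "\<dots> = (\<Sum>j=1..n. \<Sum>l=1..n+1-j. g l (l+j-1))"
    by (rule sum.Sigma[symmetric]) auto
  finally show ?thesis .
qed

lemma win_shift:
  fixes v :: "nat \<Rightarrow> real"
  assumes "j \<ge> 1"
  shows "(\<Sum>i=l..l+j-1. v i) = (\<Sum>t<j. v (l+t))"
proof -
  have "{l..l+j-1} = {0+l..<j+l}" using assms by auto
  then have "(\<Sum>i=l..l+j-1. v i) = (\<Sum>t=0..<j. v (t+l))"
    using sum.shift_bounds_nat_ivl[of v 0 l j] by simp
  then show ?thesis by (simp add: atLeast0LessThan add.commute)
qed

lemma swap_bound:
  fixes v :: "nat \<Rightarrow> real"
  assumes "1 \<le> j" "j \<le> n"
  shows "(\<Sum>l=1..n+1-j. \<Sum>i=l..l+j-1. v i) = (\<Sum>t<j. \<Sum>i=1+t..n+1-j+t. v i)"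
proof -
  have "(\<Sum>l=1..n+1-j. \<Sum>i=l..l+j-1. v i) = (\<Sum>l=1..n+1-j. \<Sum>t<j. v (l+t))"
    using win_shift[OF assms(1)] by simp
  also have "\<dots> = (\<Sum>t<j. \<Sum>l=1..n+1-j. v (l+t))" by (rule sum.swap)
  also have "\<dots> = (\<Sum>t<j. \<Sum>i=1+t..n+1-j+t. v i)"
    proof (rule sum.cong[OF refl])
    fix t
    show "(\<Sum>l=1..n+1-j. v (l+t)) = (\<Sum>i=1+t..n+1-j+t. v i)"
      using sum.shift_bounds_cl_nat_ivl[of v 1 t "n+1-j"] by simp
  qed
  finally show ?thesis .
qed

lemma lower:
  fixes v :: "nat \<Rightarrow> real"
  assumes v: "v \<in> Lambda n w" and j: "1 \<le> j" "j \<le> n"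
  shows "(\<Sum>l=1..n+1-j. posp (x - (\<Sum>i=l..l+j-1. v i))) \<ge> real (n+1-j) * x - real j * w"
proof -
  have nn: "\<And>i. i \<in> {1..n} \<Longrightarrow> v i \<ge> 0" and sw: "(\<Sum>i=1..n. v i) = w"
    using v by (auto simp: Lambda_def)
  have "(\<Sum>t<j. \<Sum>i=1+t..n+1-j+t. v i) \<le> (\<Sum>t<(j::nat). w)"
  proof (rule sum_mono)
    fix t assume "t \<in> {..<j}"
    then have "{1+t..n+1-j+t} \<subseteq> {1..n}" using j by auto
    then show "(\<Sum>i=1+t..n+1-j+t. v i) \<le> w"
      using sum_mono2[of "{1..n}" "{1+t..n+1-j+t}" v] nn sw by auto
  qed
  then have A: "(\<Sum>l=1..n+1-j. \<Sum>i=l..l+j-1. v i) \<le> real j * w"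
    using swap_bound[OF j, of v] by simp
  have "(\<Sum>l=1..n+1-j. posp (x - (\<Sum>i=l..l+j-1. v i))) \<ge> (\<Sum>l=1..n+1-j. (x - (\<Sum>i=l..l+j-1. v i)))"
    by (rule sum_mono) (simp add: posp_def)
  also have "(\<Sum>l=1..n+1-j. (x - (\<Sum>i=l..l+j-1. v i))) = real (n+1-j) * x - (\<Sum>l=1..n+1-j. \<Sum>i=l..l+j-1. v i)"
    by (simp add: sum_subtractf)
  finally show ?thesis using A by linarith
qed

lemma gauss_real: "(\<Sum>j=1..d. real j) = real d * (real d + 1) / 2"
  by (induction d) (auto simp: algebra_simps)

theorem mainTheorem3:
  fixes n m :: nat and x :: real and D :: "nat \<Rightarrow> nat" and vstar :: "nat \<Rightarrow> real"
  assumes "n \<ge> 1" and "1 \<le> m" and "m \<le> n" and "x > 0"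
    and "\<forall>k\<in>{1..m+1}. D k = (n+1) div (m+1) \<or> D k = (n+1) div (m+1) + 1"
    and "(\<Sum>k=1..m+1. D k) = n + 1"
    and "\<forall>i. vstar i = (if i \<in> {(\<Sum>k=1..j. D k) | j. 1 \<le> j \<and> j \<le> m} then x else 0)"
  shows "vstar \<in> Lambda n (real m * x)
    \<and> (\<forall>v\<in>Lambda n (real m * x). fobj n x vstar \<le> fobj n x v)
    \<and> (INF v\<in>Lambda n (real m * x). fobj n x v) = fobj n x vstar
    \<and> fobj n x vstar = real ((n+1) div (m+1)) * real (n+1) * x
          - (1/2) * real (m+1) * x * real ((n+1) div (m+1)) * real ((n+1) div (m+1) + 1)
    \<and> (\<forall>v\<in>Lambda n (real m * x). \<forall>j\<in>{1..n}.
          (\<Sum>l=1..n+1-j. posp (x - (\<Sum>i=l..l+j-1. v i)))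
            \<ge> (\<Sum>l=1..n+1-j. posp (x - (\<Sum>i=l..l+j-1. vstar i))))"
proof -
  note n1 = assms(1) and m1 = assms(2) and mn = assms(3) and xpos = assms(4)
  define d where "d = (n+1) div (m+1)"
  have d1: "d*(m+1) \<le> n+1" unfolding d_def using div_mult_mod_eq[of "n+1" "m+1"] by linarith
  have d2: "n+1 < (d+1)*(m+1)"
  proof -
    have "(d+1)*(m+1) = d*(m+1) + (m+1)" by simp
    moreover have "(n+1) mod (m+1) < m+1" by simp
    ultimately show ?thesis unfolding d_def using div_mult_mod_eq[of "n+1" "m+1"] by linarith
  qed
  have dge: "d \<ge> 1" unfolding d_def using mn by (simp add: div_le_mono[of "m+1" "n+1" "m+1", simplified])
  have dle: "d \<le> n"
  proof -
    have "d*2 \<le> d*(m+1)" using m1 by (intro mult_le_mono2) simp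
    then show ?thesis using d1 dge by linarith
  qed
  have Dlo: "\<And>k. k\<in>{1..m+1} \<Longrightarrow> d \<le> D k" and Dhi: "\<And>k. k\<in>{1..m+1} \<Longrightarrow> D k \<le> d+1"
    using assms(5) unfolding d_def by force+
  define p where "p k = (\<Sum>i=1..k. D i)" for k
  have p0: "p 0 = 0" by (simp add: p_def)
  have pS: "p (Suc k) = p k + D (Suc k)" for k by (simp add: p_def)
  have pm1: "p (m+1) = n+1" using assms(6) by (simp add: p_def)
  have pdiff: "a \<le> b \<Longrightarrow> b \<le> m+1 \<Longrightarrow> p a + d*(b-a) \<le> p b" for a b
  proof (induction b)
    case 0 then show ?case by simp
  next
    case (Suc b)
    show ?case
    proof (cases "a = Suc b")
      case True then show ?thesis by simp
    next
      case False
      then have "a \<le> b" using Suc by simp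
      then have "p a + d*(b-a) \<le> p b" using Suc by simp
      moreover have "d \<le> D (Suc b)" using Dlo[of "Suc b"] Suc by simp
      moreover have "d*(Suc b - a) = d*(b-a) + d" using \<open>a \<le> b\<close> by (simp add: Suc_diff_le)
      ultimately show ?thesis using pS[of b] by simp
    qed
  qed
  define P where "P = p ` {1..m}"
  have Pset: "{(\<Sum>k=1..j. D k) | j. 1 \<le> j \<and> j \<le> m} = P"
    unfolding P_def p_def by auto
  have vs: "vstar i = (if i \<in> P then x else 0)" for i
  proof -
    have "vstar i = (if i \<in> {(\<Sum>k=1..j. D k) | j. 1 \<le> j \<and> j \<le> m} then x else 0)"
      using assms(7) by blast
    then show ?thesis by (simp only: Pset)
  qed
  have Plo: "q \<in> P \<Longrightarrow> d \<le> q" for q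
  proof -
    assume "q \<in> P" then obtain k where k: "k \<in> {1..m}" "q = p k" unfolding P_def by auto
    have "p 0 + d*(k-0) \<le> p k" using pdiff[of 0 k] k by simp
    then show ?thesis using k p0 by (metis add_0 le_trans minus_nat.diff_0 mult_le_mono2 nat_mult_1_right atLeastAtMost_iff)
  qed
  have Phi: "q \<in> P \<Longrightarrow> q + d \<le> n+1" for q
  proof -
    assume "q \<in> P" then obtain k where k: "k \<in> {1..m}" "q = p k" unfolding P_def by auto
    have "p k + d*(m+1-k) \<le> p (m+1)" using pdiff[of k "m+1"] k by simp
    moreover have "d*1 \<le> d*(m+1-k)" using k by (intro mult_le_mono2) auto
    ultimately show ?thesis using k pm1 by linarith
  qed
  have Psep: "a \<in> {1..m} \<Longrightarrow> b \<in> {1..m} \<Longrightarrow> a < b \<Longrightarrow> p a + d \<le> p b" for a b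
  proof -
    assume ab: "a \<in> {1..m}" "b \<in> {1..m}" "a < b"
    have "p a + d*(b-a) \<le> p b" using pdiff[of a b] ab by simp
    moreover have "d*1 \<le> d*(b-a)" using ab by (intro mult_le_mono2) auto
    ultimately show ?thesis by linarith
  qed
  have injp: "inj_on p {1..m}"
  proof (rule inj_onI)
    fix a b assume ab: "a \<in> {1..m}" "b \<in> {1..m}" "p a = p b"
    show "a = b"
    proof (rule ccontr)
      assume "a \<noteq> b"
      then have "a < b \<or> b < a" by arith
      then show False using Psep[of a b] Psep[of b a] ab dge by auto
    qed
  qed
  have cardP: "card P = m" unfolding P_def using card_image[OF injp] by simp
  have finP: "finite P" unfolding P_def by simp
  have vsum: "finite A \<Longrightarrow> (\<Sum>i\<in>A. vstar i) = x * real (card (A \<inter> P))" for A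
  proof -
    assume fA: "finite A"
    have "(\<Sum>i\<in>A. vstar i) = (\<Sum>i\<in>A. if i \<in> P then x else 0)" by (simp add: vs)
    also have "\<dots> = (\<Sum>i\<in>A \<inter> P. x)" using sum.inter_restrict[OF fA, of "\<lambda>_. x" P] by simp
    finally show ?thesis by simp
  qed
  have vnn: "vstar i \<ge> 0" for i using xpos vs by simp
  have PA: "P \<subseteq> {1..n}" using Plo Phi dge by fastforce
  have inL: "vstar \<in> Lambda n (real m * x)"
  proof -
    have "{1..n} \<inter> P = P" using PA by auto
    then show ?thesis unfolding Lambda_def using vsum[of "{1..n}"] vnn cardP by simp
  qed
  define c where "c j = real (n+1) - real j * real (m+1)" for j :: nat
  define W where "W v j = (\<Sum>l=1..n+1-j. posp (x - (\<Sum>i=l..l+j-1. v i)))" for v :: "nat \<Rightarrow> real" and j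
  have Wlow: "v \<in> Lambda n (real m * x) \<Longrightarrow> j \<in> {1..n} \<Longrightarrow> x * max 0 (c j) \<le> W v j" for v j
  proof -
    assume v: "v \<in> Lambda n (real m * x)" and j: "j \<in> {1..n}"
    have "W v j \<ge> real (n+1-j) * x - real j * (real m * x)"
      unfolding W_def using lower[OF v, of j x] j by simp
    moreover have "real (n+1-j) * x - real j * (real m * x) = x * c j"
      using j unfolding c_def by (simp add: of_nat_diff algebra_simps)
    moreover have "W v j \<ge> 0" unfolding W_def by (rule sum_nonneg) (simp add: posp_def)
    ultimately show ?thesis using xpos by (cases "c j \<ge> 0") (auto simp: max_def)
  qed
  have Wstar: "j \<in> {1..n} \<Longrightarrow> W vstar j \<le> x * max 0 (c j)" for j
  proof -
    assume j: "j \<in> {1..n}"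
    show ?thesis
    proof (cases "j \<le> d")
      case True
      have one: "(\<Sum>i=l..l+j-1. vstar i) \<le> x" for l
      proof -
        have "card ({l..l+j-1} \<inter> P) \<le> Suc 0"
        proof (subst card_le_Suc0_iff_eq, simp, intro ballI)
          fix q1 q2 assume q: "q1 \<in> {l..l+j-1} \<inter> P" "q2 \<in> {l..l+j-1} \<inter> P"
          then obtain a b where ab: "a \<in> {1..m}" "b \<in> {1..m}" "q1 = p a" "q2 = p b"
            unfolding P_def by auto
          show "q1 = q2"
          proof (rule ccontr)
            assume "q1 \<noteq> q2"
            then have "a < b \<or> b < a" using ab \<open>q1 \<noteq> q2\<close> by (metis linorder_neqE_nat)
            then show False using Psep[of a b] Psep[of b a] ab q True Plo[of q1] Plo[of q2] dge j by auto
          qed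
        qed
        then show ?thesis using vsum[of "{l..l+j-1}"] xpos by simp
      qed
      have "W vstar j = (\<Sum>l=1..n+1-j. x - (\<Sum>i=l..l+j-1. vstar i))"
        unfolding W_def by (rule sum.cong[OF refl]) (use one in \<open>simp add: posp_def\<close>)
      also have "\<dots> = real (n+1-j) * x - (\<Sum>l=1..n+1-j. \<Sum>i=l..l+j-1. vstar i)"
        by (simp add: sum_subtractf)
      also have "(\<Sum>l=1..n+1-j. \<Sum>i=l..l+j-1. vstar i) = (\<Sum>t<j. \<Sum>i=1+t..n+1-j+t. vstar i)"
        using swap_bound[of j n vstar] j by simp
      also have "\<dots> = (\<Sum>t<j. x * real m)"
      proof (rule sum.cong[OF refl])
        fix t assume t: "t \<in> {..<j}"
        have "{1+t..n+1-j+t} \<inter> P = P"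
          using Plo Phi t True j by fastforce
        then show "(\<Sum>i=1+t..n+1-j+t. vstar i) = x * real m" using vsum cardP by simp
      qed
      finally have "W vstar j = x * c j" using j unfolding c_def by (simp add: of_nat_diff algebra_simps)
      then show ?thesis using xpos by (simp add: mult_left_mono)
    next
      case False
      have zero: "posp (x - (\<Sum>i=l..l+j-1. vstar i)) = 0" if l: "l \<in> {1..n+1-j}" for l
      proof -
        have "\<exists>q\<in>P. q \<in> {l..l+j-1}"
        proof (rule ccontr)
          assume nq: "\<not> (\<exists>q\<in>P. q \<in> {l..l+j-1})"
          have "t \<le> m+1 \<Longrightarrow> p t < l" for t
          proof (induction t)
            case 0 then show ?case using p0 l by simp
          next
            case (Suc t)
            then have pt: "p t < l" by simp
            have "p (Suc t) \<le> l + j - 1" using pS[of t] Dhi[of "Suc t"] Suc.prems False pt by simp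
            show ?case
            proof (rule ccontr)
              assume "\<not> p (Suc t) < l"
              then have inw: "p (Suc t) \<in> {l..l+j-1}" using \<open>p (Suc t) \<le> l + j - 1\<close> by simp
              show False
              proof (cases "Suc t \<le> m")
                case True
                then have "p (Suc t) \<in> P" unfolding P_def by simp
                then show False using nq inw by blast
              next
                case False
                then have "Suc t = m+1" using Suc.prems by simp
                then show False using inw pm1 l j by (simp, arith)
              qed
            qed
          qed
          from this[of "m+1"] pm1 l show False by simp
        qed
        then have "card ({l..l+j-1} \<inter> P) \<ge> 1" using finP by (auto simp: card_gt_0_iff Suc_le_eq)
        then have "(\<Sum>i=l..l+j-1. vstar i) \<ge> x" using vsum[of "{l..l+j-1}"] xpos by simp
        then show ?thesis by (simp add: posp_def)
      qed
      have "W vstar j = 0" unfolding W_def by (rule sum.neutral) (use zero in auto)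
      then show ?thesis using xpos by simp
    qed
  qed
  have Weq: "j \<in> {1..n} \<Longrightarrow> W vstar j = x * max 0 (c j)" for j
    using Wlow[OF inL] Wstar by (meson order_antisym)
  have fW: "fobj n x v = (\<Sum>j=1..n. W v j)" for v
    unfolding fobj_def W_def using reidx[of "\<lambda>l k. posp (x - (\<Sum>i=l..k. v i))" n] by simp
  have part2: "\<forall>v\<in>Lambda n (real m * x). fobj n x vstar \<le> fobj n x v"
  proof
    fix v assume v: "v \<in> Lambda n (real m * x)"
    show "fobj n x vstar \<le> fobj n x v" unfolding fW
      by (rule sum_mono) (use Weq Wlow[OF v] in simp)
  qed
  have part3: "(INF v\<in>Lambda n (real m * x). fobj n x v) = fobj n x vstar"
    using part2 inL by (intro cInf_eq_minimum) auto
  have part5: "\<forall>v\<in>Lambda n (real m * x). \<forall>j\<in>{1..n}.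
          (\<Sum>l=1..n+1-j. posp (x - (\<Sum>i=l..l+j-1. v i)))
            \<ge> (\<Sum>l=1..n+1-j. posp (x - (\<Sum>i=l..l+j-1. vstar i)))"
    using Wlow Weq unfolding W_def by simp
  have part4: "fobj n x vstar = real d * real (n+1) * x
          - (1/2) * real (m+1) * x * real d * real (d + 1)"
  proof -
    have "fobj n x vstar = (\<Sum>j=1..n. x * max 0 (c j))" unfolding fW by (simp add: Weq)
    also have "{1..n} = {1..d} \<union> {d+1..n}" using dle by auto
    also have "(\<Sum>j\<in>{1..d} \<union> {d+1..n}. x * max 0 (c j)) = (\<Sum>j=1..d. x * max 0 (c j)) + (\<Sum>j=d+1..n. x * max 0 (c j))"
      by (rule sum.union_disjoint) auto
    also have "(\<Sum>j=d+1..n. x * max 0 (c j)) = 0"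
    proof (rule sum.neutral, intro ballI)
      fix j assume "j \<in> {d+1..n}"
      then have "(d+1)*(m+1) \<le> j*(m+1)" by (intro mult_le_mono1) simp
      then have "real (n+1) \<le> real j * real (m+1)" using d2
        by (metis of_nat_le_iff of_nat_mult less_imp_le order_trans)
      then show "x * max 0 (c j) = 0" unfolding c_def by simp
    qed
    also have "(\<Sum>j=1..d. x * max 0 (c j)) = (\<Sum>j=1..d. x * real (n+1) - x * real (m+1) * real j)"
    proof (rule sum.cong[OF refl])
      fix j assume "j \<in> {1..d}"
      then have "j*(m+1) \<le> n+1" using d1 by (meson atLeastAtMost_iff le_trans mult_le_mono1)
      then have "real j * real (m+1) \<le> real (n+1)" by (metis of_nat_le_iff of_nat_mult)
      then show "x * max 0 (c j) = x * real (n+1) - x * real (m+1) * real j" unfolding c_def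
        by (simp add: algebra_simps)
    qed
    also have "\<dots> = real d * (x * real (n+1)) - x * real (m+1) * (\<Sum>j=1..d. real j)"
      by (simp add: sum_subtractf sum_distrib_left)
    finally have F: "fobj n x vstar = real d * (x * real (n+1)) - x * real (m+1) * (\<Sum>j=1..d. real j)" by simp
    show ?thesis unfolding F gauss_real by (simp add: algebra_simps)
  qed
  show ?thesis using inL part2 part3 part4 part5 unfolding d_def by blast
qed

end
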